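(* Let $\Sigma$ be an alphabet with $|\Sigma|=q$ and let $C\subseteq\Sigma^n$ be a code with $|C|\ge 2$ and minimum Levenshtein distance $d$. Suppose there is a word $v\in\Sigma^N$ that contains every codeword of $C$ as a (not necessarily contiguous) subsequence. If $$\frac{d}{2n} > 1 - \frac{n}{N},$$ then $$|C| \leq \frac{Nd}{Nd - 2(N-n)n}.$$
   Context: For words $x,y$ over $\Sigma$, the Levenshtein distance $d_\mathsf{L}(x,y)$ is the minimum number of single-symbol insertions and deletions needed to transform $x$ into $y$. The minimum Levenshtein distance of a code $C$ is $\min\{d_\mathsf{L}(c_1,c_2): c_1\neq c_2 \in C\}$. *)

theory Defs
  imports Complex_Main "HOL-Library.Sublist"
begin

definition indel_step :: "'a list \<Rightarrow> 'a list \<Rightarrow> bool" where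
  "indel_step x y \<longleftrightarrow> (\<exists>u w a. (x = u @ a # w \<and> y = u @ w) \<or> (x = u @ w \<and> y = u @ a # w))"

definition ldist :: "'a list \<Rightarrow> 'a list \<Rightarrow> nat" where
  "ldist x y = (LEAST k. (indel_step ^^ k) x y)"

definition min_ldist :: "'a list set \<Rightarrow> nat" where
  "min_ldist C = Min {ldist c1 c2 | c1 c2. c1 \<in> C \<and> c2 \<in> C \<and> c1 \<noteq> c2}"

end

theory Submission
  imports Defs
begin

lemma step_cons: "indel_step a b \<Longrightarrow> indel_step (x#a) (x#b)"
  unfolding indel_step_def
  by (metis append_Cons)

lemma path_cons: "(indel_step ^^ k) a b \<Longrightarrow> (indel_step ^^ k) (x#a) (x#b)"
proof (induction k arbitrary: b)
  case 0 then show ?case by simp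
next
  case (Suc k)
  then obtain m where "(indel_step ^^ k) a m" "indel_step m b" by auto
  then show ?case using Suc.IH step_cons by (meson relpowp_Suc_I)
qed

lemma del_path: "subseq w x \<Longrightarrow> (indel_step ^^ (length x - length w)) x w"
proof (induction x arbitrary: w)
  case Nil then show ?case by (auto dest: list_emb_Nil2)
next
  case (Cons y ys)
  from Cons.prems consider "subseq w ys" | w' where "w = y # w'" "subseq w' ys"
    by (cases w) (auto split: if_splits)
  then show ?case
  proof cases
    case 1
    have le: "length w \<le> length ys" using 1 list_emb_length by blast
    have "indel_step (y#ys) ys" unfolding indel_step_def by (metis append_Nil)
    with Cons.IH[OF 1] have "(indel_step ^^ Suc (length ys - length w)) (y#ys) w"
      by (meson relpowp_Suc_I2)
    then show ?thesis using le by (simp add: Suc_diff_le)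
  next
    case 2
    show ?thesis using path_cons[OF Cons.IH[OF 2(2)]] 2(1) by simp
  qed
qed

lemma ins_path: "subseq w x \<Longrightarrow> (indel_step ^^ (length x - length w)) w x"
proof (induction x arbitrary: w)
  case Nil then show ?case by (auto dest: list_emb_Nil2)
next
  case (Cons y ys)
  from Cons.prems consider "subseq w ys" | w' where "w = y # w'" "subseq w' ys"
    by (cases w) (auto split: if_splits)
  then show ?case
  proof cases
    case 1
    have le: "length w \<le> length ys" using 1 list_emb_length by blast
    have "indel_step ys (y#ys)" unfolding indel_step_def by (metis append_Nil)
    with Cons.IH[OF 1] have "(indel_step ^^ Suc (length ys - length w)) w (y#ys)"
      by (meson relpowp_Suc_I)
    then show ?thesis using le by (simp add: Suc_diff_le)
  next
    case 2
    show ?thesis using path_cons[OF Cons.IH[OF 2(2)]] 2(1) by simp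
  qed
qed

lemma ldist_common: assumes "subseq w x" "subseq w y"
  shows "ldist x y \<le> (length x - length w) + (length y - length w)"
proof -
  have "(indel_step ^^ ((length x - length w) + (length y - length w))) x y"
    using del_path[OF assms(1)] ins_path[OF assms(2)] by (auto simp: relpowp_add)
  then show ?thesis unfolding ldist_def by (rule Least_le)
qed

lemma nths_subset_subseq: "A \<subseteq> B \<Longrightarrow> subseq (nths xs A) (nths xs B)"
proof -
  assume "A \<subseteq> B"
  then have "filter (\<lambda>p. snd p \<in> A) (zip xs [0..<length xs]) =
     filter (\<lambda>p. snd p \<in> A) (filter (\<lambda>p. snd p \<in> B) (zip xs [0..<length xs]))"
    by (auto simp: filter_filter intro!: filter_cong)
  then show ?thesis unfolding nths_def by (metis subseq_filter_left subseq_map)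
qed

lemma nths_restrict: "nths xs I = nths xs {i. i < length xs \<and> i \<in> I}"
  unfolding nths_def by (auto intro!: arg_cong[where f="map fst"] filter_cong dest: set_zip_rightD)

lemma cs_sum: fixes f :: "nat \<Rightarrow> real" assumes "N > 0"
  shows "(\<Sum>x<N. f x)^2 \<le> real N * (\<Sum>x<N. (f x)^2)"
proof -
  define s where "s = (\<Sum>x<N. f x)"
  define a where "a = s / real N"
  have aN: "a * real N = s" using assms by (simp add: a_def)
  have "0 \<le> (\<Sum>x<N. (f x - a)^2)" by (simp add: sum_nonneg)
  also have "\<dots> = (\<Sum>x<N. (f x)^2) - 2*a*s + real N * a^2"
    by (simp add: power2_diff sum.distrib sum_subtractf sum_distrib_left[symmetric] s_def algebra_simps) (simp add: sum_distrib_left mult.commute)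
  finally have "0 \<le> real N * ((\<Sum>x<N. (f x)^2) - 2*a*s + real N * a^2)" by simp
  also have "\<dots> = real N * (\<Sum>x<N. (f x)^2) - 2*(a*real N)*s + (a * real N)^2"
    by (simp add: algebra_simps power2_eq_square)
  also have "\<dots> = real N * (\<Sum>x<N. (f x)^2) - s^2" unfolding aN by (simp add: power2_eq_square)
  finally show ?thesis by (simp add: s_def)
qed

lemma sum_ind: "finite A \<Longrightarrow> (\<Sum>x\<in>A. (if x \<in> B then 1 else 0 :: real)) = real (card (A \<inter> B))"
  by (simp add: sum.If_cases Int_def)

theorem mainTheorem7:
  fixes Sigma :: "'a set" and q n N d :: nat and C :: "'a list set" and v :: "'a list"
  assumes "finite Sigma" and "card Sigma = q"
    and "C \<subseteq> {w. set w \<subseteq> Sigma \<and> length w = n}"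
    and "card C \<ge> 2"
    and "d = min_ldist C"
    and "set v \<subseteq> Sigma" and "length v = N"
    and "\<forall>c\<in>C. subseq c v"
    and "real d / (2 * real n) > 1 - real n / real N"
  shows "real (card C) \<le> real N * real d / (real N * real d - 2 * (real N - real n) * real n)"
proof -
  have finC: "finite C" using assms(4) card.infinite by fastforce
  have "C \<noteq> {}" using assms(4) by auto
  then obtain c0 where c0: "c0 \<in> C" by auto
  have lenC: "\<And>c. c \<in> C \<Longrightarrow> length c = n" using assms(3) by auto
  have "n \<le> N" using assms(8) c0 lenC[OF c0] assms(7) list_emb_length by fastforce
  have n0: "n > 0"
  proof (rule ccontr)
    assume "\<not> n > 0" then have "n = 0" by simp
    then show False using assms(9) by simp
  qed
  have N0: "N > 0" using n0 \<open>n \<le> N\<close> by simp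
  define S where "S c = {i. i < N \<and> i \<in> (SOME I. c = nths v I)}" for c
  have S_nths: "c = nths v (S c)" if "c \<in> C" for c
  proof -
    have "\<exists>I. c = nths v I" using assms(8) that subseq_conv_nths by blast
    then have "c = nths v (SOME I. c = nths v I)" by (rule someI_ex)
    then show ?thesis unfolding S_def using nths_restrict assms(7) by metis
  qed
  have S_sub: "S c \<subseteq> {..<N}" for c unfolding S_def by auto
  have S_card: "card (S c) = n" if "c \<in> C" for c
  proof -
    have "n = length (nths v (S c))" using S_nths[OF that] lenC[OF that] by simp
    moreover have "{i. i < N \<and> i \<in> S c} = S c" using S_sub[of c] by auto
    then have "length (nths v (S c)) = card (S c)" unfolding length_nths assms(7) by simp
    ultimately show ?thesis by simp
  qed
  have off: "real (card (S c \<inter> S c')) \<le> real n - real d / 2"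
    if "c \<in> C" "c' \<in> C" "c \<noteq> c'" for c c'
  proof -
    define w where "w = nths v (S c \<inter> S c')"
    have "{i. i < N \<and> i \<in> S c \<inter> S c'} = S c \<inter> S c'" using S_sub[of c] by auto
    then have lw: "length w = card (S c \<inter> S c')" unfolding w_def length_nths assms(7) by simp
    have "subseq w c" unfolding w_def using S_nths[OF that(1)] nths_subset_subseq
      by (metis inf_le1)
    moreover have "subseq w c'" unfolding w_def using S_nths[OF that(2)] nths_subset_subseq
      by (metis inf_le2)
    ultimately have ld: "ldist c c' \<le> (n - length w) + (n - length w)"
      using ldist_common lenC that by metis
    have lwn: "length w \<le> n" using \<open>subseq w c\<close> list_emb_length lenC[OF that(1)] by metis
    have "d \<le> ldist c c'"
    proof -
      have fin: "finite {ldist c1 c2 | c1 c2. c1 \<in> C \<and> c2 \<in> C \<and> c1 \<noteq> c2}"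
      proof -
        have "{ldist c1 c2 | c1 c2. c1 \<in> C \<and> c2 \<in> C \<and> c1 \<noteq> c2} \<subseteq> (\<lambda>(a,b). ldist a b) ` (C \<times> C)"
          by auto
        then show ?thesis using finC by (meson finite_SigmaI finite_imageI finite_subset)
      qed
      show ?thesis unfolding assms(5) min_ldist_def by (rule Min_le[OF fin]) (use that in blast)
    qed
    with ld have "d \<le> 2 * (n - length w)" by linarith
    then have "real d \<le> real (2 * (n - length w))" by linarith
    then have "real d \<le> 2 * (real n - real (length w))" using lwn by (simp add: of_nat_diff)
    then show ?thesis using lw by simp
  qed
  define ind where "ind c x = (if x \<in> S c then 1 else 0 :: real)" for c x
  define M where "M = card C"
  define R where "R x = (\<Sum>c\<in>C. ind c x)" for x
  have ind_row: "(\<Sum>x<N. ind c x) = real n" if "c \<in> C" for c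
    unfolding ind_def using sum_ind[of "{..<N}" "S c"] S_sub[of c] S_card[OF that]
    by (simp add: Int_absorb1)
  have ind_pair: "(\<Sum>x<N. ind c x * ind c' x) = real (card (S c \<inter> S c'))" for c c'
  proof -
    have "(\<Sum>x<N. ind c x * ind c' x) = (\<Sum>x<N. if x \<in> S c \<inter> S c' then 1 else 0)"
      unfolding ind_def by (intro sum.cong) auto
    also have "\<dots> = real (card ({..<N} \<inter> (S c \<inter> S c')))" by (rule sum_ind) simp
    also have "{..<N} \<inter> (S c \<inter> S c') = S c \<inter> S c'" using S_sub[of c] by auto
    finally show ?thesis .
  qed
  have sumR: "(\<Sum>x<N. R x) = real M * real n"
  proof -
    have "(\<Sum>x<N. R x) = (\<Sum>c\<in>C. \<Sum>x<N. ind c x)" unfolding R_def by (rule sum.swap)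
    also have "\<dots> = (\<Sum>c\<in>C. real n)" using ind_row by simp
    finally show ?thesis by (simp add: M_def)
  qed
  have sumR2: "(\<Sum>x<N. (R x)^2) = (\<Sum>c\<in>C. \<Sum>c'\<in>C. real (card (S c \<inter> S c')))"
  proof -
    have "(\<Sum>x<N. (R x)^2) = (\<Sum>x<N. \<Sum>c\<in>C. \<Sum>c'\<in>C. ind c x * ind c' x)"
      unfolding R_def power2_eq_square by (simp add: sum_product)
    also have "\<dots> = (\<Sum>c\<in>C. \<Sum>x<N. \<Sum>c'\<in>C. ind c x * ind c' x)" by (rule sum.swap)
    also have "\<dots> = (\<Sum>c\<in>C. \<Sum>c'\<in>C. \<Sum>x<N. ind c x * ind c' x)"
      by (intro sum.cong refl sum.swap)
    also have "\<dots> = (\<Sum>c\<in>C. \<Sum>c'\<in>C. real (card (S c \<inter> S c')))"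
      by (simp add: ind_pair)
    finally show ?thesis .
  qed
  have row: "(\<Sum>c'\<in>C. real (card (S c \<inter> S c'))) \<le> real n + (real M - 1) * (real n - real d / 2)"
    if "c \<in> C" for c
  proof -
    have "(\<Sum>c'\<in>C. real (card (S c \<inter> S c'))) = real (card (S c \<inter> S c)) + (\<Sum>c'\<in>C-{c}. real (card (S c \<inter> S c')))"
      using sum.remove[OF finC that] by blast
    also have "real (card (S c \<inter> S c)) = real n" using S_card[OF that] by simp
    also have "(\<Sum>c'\<in>C-{c}. real (card (S c \<inter> S c'))) \<le> real (card (C-{c})) * (real n - real d / 2)"
      using sum_bounded_above[of "C-{c}" "\<lambda>c'. real (card (S c \<inter> S c'))" "real n - real d / 2"] off[OF that] by auto
    also have "real (card (C-{c})) = real M - 1" using finC that M_def assms(4) by (simp add: of_nat_diff)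
    finally show ?thesis by simp
  qed
  have up: "(\<Sum>x<N. (R x)^2) \<le> real M * (real n + (real M - 1) * (real n - real d / 2))"
    unfolding sumR2 using sum_mono[of C _ "\<lambda>_. real n + (real M - 1) * (real n - real d / 2)"] row
    M_def by simp
  have cs: "(real M * real n)^2 \<le> real N * (real M * (real n + (real M - 1) * (real n - real d / 2)))"
    using cs_sum[OF N0, of R] sumR up N0 by (metis mult_left_mono of_nat_0_le_iff order_trans)
  have M0: "real M > 0" using assms(4) M_def by simp
  have cs2: "real M * (real n)^2 \<le> real N * (real n + (real M - 1) * (real n - real d / 2))"
  proof -
    have "real M * (real M * (real n)^2) \<le> real M * (real N * (real n + (real M - 1) * (real n - real d / 2)))"
      using cs by (simp add: power2_eq_square algebra_simps)
    then show ?thesis using M0 by simp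
  qed
  have D0: "real N * real d - 2 * (real N - real n) * real n > 0"
  proof -
    have h: "real d / (2 * real n) > 1 - real n / real N" by (rule assms(9))
    have "real d * real N > (2 * real n) * (real N - real n)"
      using h n0 N0 by (simp add: field_simps)
    then show ?thesis by (simp add: algebra_simps)
  qed
  have "real M * (real N * real d - 2 * (real N - real n) * real n) \<le> real N * real d"
  proof -
    have "real M * (real N * real d - 2 * (real N - real n) * real n) =
      2 * (real M * (real n)^2 - real N * (real n + (real M - 1) * (real n - real d / 2))) + real N * real d"
      by (simp add: field_simps power2_eq_square)
    moreover obtain A B where "A = real M * (real n)^2" "B = real N * (real n + (real M - 1) * (real n - real d / 2))" by blast
    ultimately show ?thesis using cs2 by simp
  qed
  then show ?thesis using D0 M_def by (simp add: field_simps)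
qed

end
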